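(* Let $A$ be a treatment taking values in a finite set $\mathcal{A}=\{a_1,\ldots,a_J\}$, let $X$ be a vector of measured pre-treatment covariates, and for each $a\in\mathcal{A}$ let $Y(a)$ be the potential outcome under treatment $a$, with observed binary outcome $Y=\sum_{j=1}^J Y(a_j)\mathbb{1}(A=a_j)$. Fix $x$ with $p_m:=\mathbb{P}(A=a_m\mid X=x)\in(0,1)$ for all $m$. For $a,a'\in\mathcal{A}$ with $a\neq a'$ define the confounding function $$c(a,a',x)=\mathbb{E}[Y(a)\mid A=a,X=x]-\mathbb{E}[Y(a)\mid A=a',X=x].$$ Consider the pairwise treatment effect between $a_j\neq a_k\in\mathcal{A}$ on the risk-difference scale, and suppose $Y(a)$ is not conditionally independent of $A$ given $X$ (treatment assignment is not ignorable). Then the bias incurred by ignoring unmeasured confounding, namely $$\mathrm{Bias}(a_j,a_k)=\mathbb{E}[Y\mid A=a_j,X=x]-\mathbb{E}[Y\mid A=a_k,X=x]-\mathbb{E}[Y(a_j)-Y(a_k)\mid X=x],$$ equals $$\mathrm{Bias}(a_j,a_k)=-p_j\,c(a_k,a_j,x)+p_k\,c(a_j,a_k,x)-\sum_{l:\,a_l\in\mathcal{A}\setminus\{a_j,a_k\}}p_l\{c(a_k,a_l,x)-c(a_j,a_l,x)\}.$$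
   Context: Potential outcomes framework: each unit has potential outcomes $Y(a_1),\ldots,Y(a_J)$, of which only the one for the received treatment is observed. The generalized propensity scores $\mathbb{P}(A=a_m\mid X=x)$ sum to 1 over $m$. The stable unit treatment value assumption (each unit's potential outcomes do not depend on other units' treatments) and overlap ($0<\mathbb{P}(A=a\mid X)<1$ for all $a$) are maintained. *)

theory Defs
  imports "HOL-Probability.Probability"
begin

text \<open>All quantities are conditional on X = x: the probability space M is the
conditional distribution of the unit given X = x.\<close>

definition tprob :: "'w measure \<Rightarrow> ('w \<Rightarrow> 'a) \<Rightarrow> 'a \<Rightarrow> real" where
  "tprob M A a = measure M {w \<in> space M. A w = a}"

definition cexp_given :: "'w measure \<Rightarrow> ('w \<Rightarrow> real) \<Rightarrow> ('w \<Rightarrow> 'a) \<Rightarrow> 'a \<Rightarrow> real" where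
  "cexp_given M f A a =
     (\<integral>w. indicator {w \<in> space M. A w = a} w * f w \<partial>M) / tprob M A a"

definition confounding :: "'w measure \<Rightarrow> ('a \<Rightarrow> 'w \<Rightarrow> real) \<Rightarrow> ('w \<Rightarrow> 'a) \<Rightarrow> 'a \<Rightarrow> 'a \<Rightarrow> real" where
  "confounding M Yp A a a' = cexp_given M (Yp a) A a - cexp_given M (Yp a) A a'"

definition indep_rv :: "'w measure \<Rightarrow> ('w \<Rightarrow> real) \<Rightarrow> ('w \<Rightarrow> 'a) \<Rightarrow> bool" where
  "indep_rv M Z A \<longleftrightarrow> (\<forall>B\<in>sets borel. \<forall>S.
      measure M ({w \<in> space M. Z w \<in> B} \<inter> {w \<in> space M. A w \<in> S})
      = measure M {w \<in> space M. Z w \<in> B} * measure M {w \<in> space M. A w \<in> S})"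

end

theory Submission
  imports Defs
begin

theorem theorem1:
  fixes M :: "'w measure" and T :: "'a set" and A :: "'w \<Rightarrow> 'a"
    and Yp :: "'a \<Rightarrow> 'w \<Rightarrow> real" and Y :: "'w \<Rightarrow> real" and aj ak :: 'a
  assumes "prob_space M"
    and "finite T"
    and "A \<in> measurable M (count_space UNIV)"
    and "\<And>w. w \<in> space M \<Longrightarrow> A w \<in> T"
    and "\<And>a. a \<in> T \<Longrightarrow> Yp a \<in> borel_measurable M"
    and "\<And>a w. a \<in> T \<Longrightarrow> w \<in> space M \<Longrightarrow> Yp a w \<in> {0, 1}"
    and "\<And>w. w \<in> space M \<Longrightarrow> Y w = (\<Sum>a\<in>T. Yp a w * (if A w = a then 1 else 0))"
    and "\<And>a. a \<in> T \<Longrightarrow> 0 < tprob M A a \<and> tprob M A a < 1"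
    and "aj \<in> T" and "ak \<in> T" and "aj \<noteq> ak"
    and "\<not> (\<forall>a\<in>T. indep_rv M (Yp a) A)"
  shows "cexp_given M Y A aj - cexp_given M Y A ak - (\<integral>w. Yp aj w - Yp ak w \<partial>M)
       = - tprob M A aj * confounding M Yp A ak aj + tprob M A ak * confounding M Yp A aj ak
         - (\<Sum>l\<in>T - {aj, ak}. tprob M A l * (confounding M Yp A ak l - confounding M Yp A aj l))"
proof -
  interpret prob_space M by fact
  define S where "S l = {w \<in> space M. A w = l}" for l
  define p where "p l = tprob M A l" for l
  define I where "I a l = (\<integral>w. indicator (S l) w * Yp a w \<partial>M)" for a l
  define e where "e a l = I a l / p l" for a l
  have Ssets: "S l \<in> sets M" for l
    unfolding S_def using measurable_sets[OF assms(3), of "{l}"] by (simp add: vimage_def Int_def conj_commute)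
  have ppos: "l \<in> T \<Longrightarrow> p l > 0" for l using assms(8) p_def by auto
  have bnd: "a \<in> T \<Longrightarrow> integrable M (Yp a)" for a
  proof -
    assume a: "a \<in> T"
    show ?thesis
      apply (rule integrable_const_bound[where B=1])
      using assms(6)[OF a] apply fastforce
      using assms(5)[OF a] by simp
  qed
  have intI: "a \<in> T \<Longrightarrow> integrable M (\<lambda>w. indicator (S l) w * Yp a w)" for a l
    using integrable_mult_indicator[OF Ssets bnd, of a l] by simp
  have sumind: "w \<in> space M \<Longrightarrow> (\<Sum>l\<in>T. indicator (S l) w :: real) = 1" for w
  proof -
    assume w: "w \<in> space M"
    have "(\<Sum>l\<in>T. indicator (S l) w :: real) = (\<Sum>l\<in>T. if l = A w then 1 else 0)"
      by (rule sum.cong) (auto simp: S_def w indicator_def)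
    also have "\<dots> = 1" using assms(2) assms(4)[OF w] by simp
    finally show ?thesis .
  qed
  have EY: "a \<in> T \<Longrightarrow> (\<integral>w. Yp a w \<partial>M) = (\<Sum>l\<in>T. I a l)" for a
  proof -
    assume a: "a \<in> T"
    have "(\<integral>w. Yp a w \<partial>M) = (\<integral>w. (\<Sum>l\<in>T. indicator (S l) w * Yp a w) \<partial>M)"
      by (rule Bochner_Integration.integral_cong[OF refl]) (simp_all add: sum_distrib_right[symmetric] sumind)
    also have "\<dots> = (\<Sum>l\<in>T. I a l)" unfolding I_def
      by (rule Bochner_Integration.integral_sum) (use intI a in auto)
    finally show ?thesis .
  qed
  have psum: "(\<Sum>l\<in>T. p l) = 1"
  proof -
    have "(\<Sum>l\<in>T. p l) = (\<Sum>l\<in>T. \<integral>w. indicator (S l) w \<partial>M)"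
      by (rule sum.cong) (auto simp: p_def tprob_def S_def[symmetric] Ssets)
    also have "\<dots> = (\<integral>w. (\<Sum>l\<in>T. indicator (S l) w) \<partial>M)"
      by (rule Bochner_Integration.integral_sum[symmetric]) (auto simp: Ssets integrable_indicator_iff top.not_eq_extremum[symmetric])
    also have "\<dots> = (\<integral>w. 1 \<partial>M)"
      by (rule Bochner_Integration.integral_cong[OF refl]) (auto simp: sumind)
    also have "\<dots> = 1" by (simp add: prob_space)
    finally show ?thesis .
  qed
  have IY: "l \<in> T \<Longrightarrow> (\<integral>w. indicator (S l) w * Y w \<partial>M) = I l l" for l
    unfolding I_def
    by (rule Bochner_Integration.integral_cong[OF refl]) (auto simp: indicator_def S_def assms(7) assms(2) if_distrib sum.delta cong: if_cong)
  have cY: "l \<in> T \<Longrightarrow> cexp_given M Y A l = e l l" for l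
    using IY unfolding cexp_given_def e_def p_def S_def by simp
  have cf: "confounding M Yp A a l = e a a - e a l" for a l
    unfolding confounding_def cexp_given_def e_def I_def p_def S_def by simp
  have Ie: "l \<in> T \<Longrightarrow> I a l = p l * e a l" for a l
    using ppos[of l] by (simp add: e_def)
  have EY2: "a \<in> T \<Longrightarrow> (\<integral>w. Yp a w \<partial>M) = (\<Sum>l\<in>T. p l * e a l)" for a
    using EY Ie by (simp cong: sum.cong)
  have diff: "(\<integral>w. Yp aj w - Yp ak w \<partial>M) = (\<integral>w. Yp aj w \<partial>M) - (\<integral>w. Yp ak w \<partial>M)"
    using bnd assms(9,10) by (intro Bochner_Integration.integral_diff) auto
  define R where "R = T - {aj, ak}"
  have split: "(\<Sum>l\<in>T. f l) = f aj + f ak + (\<Sum>l\<in>R. f l)" for f :: "'a \<Rightarrow> real"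
  proof -
    have "(\<Sum>l\<in>T. f l) = f aj + (\<Sum>l\<in>T - {aj}. f l)"
      using assms(2,9) by (simp add: sum.remove)
    also have "(\<Sum>l\<in>T - {aj}. f l) = f ak + (\<Sum>l\<in>T - {aj} - {ak}. f l)"
      using assms(2,10,11) by (simp add: sum.remove)
    finally show ?thesis unfolding R_def by (simp add: Diff_insert2[symmetric] insert_commute)
  qed
  have ps: "p aj + p ak + (\<Sum>l\<in>R. p l) = 1" using psum split by metis
  have rs: "(\<Sum>l\<in>R. p l * (e ak ak - e ak l - (e aj aj - e aj l)))
      = (\<Sum>l\<in>R. p l) * e ak ak - (\<Sum>l\<in>R. p l * e ak l) - (\<Sum>l\<in>R. p l) * e aj aj + (\<Sum>l\<in>R. p l * e aj l)"
    by (simp add: algebra_simps sum.distrib sum_subtractf sum_distrib_left sum_distrib_right)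
  have h1: "(p aj + p ak + sum p R) * e ak ak = e ak ak" and h2: "(p aj + p ak + sum p R) * e aj aj = e aj aj"
    using ps by simp_all
  show ?thesis
    unfolding cY[OF assms(9)] cY[OF assms(10)] cf diff EY2[OF assms(9)] EY2[OF assms(10)]
      p_def[symmetric] R_def[symmetric] split[of "\<lambda>l. p l * e aj l"] split[of "\<lambda>l. p l * e ak l"] rs
    using h1 h2 by (simp add: algebra_simps)
qed

end
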